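(* In the setting below, for every risk model $c$ on the sample, $$1\;\ge\;\mathrm{AUROC}\;\ge\;\max\Big\{\min_{1\le k\le M}B_k(\mathrm{AUNBC};a_0),\,0\Big\},$$ where for $k=1,\dots,M$ the function $B_k(\cdot;a_0)$, defined for $y\in[a_0p_1-(1-a_0)P_M,\;a_0]$, is $$B_k(y;a_0)=\begin{cases}1-\frac{a_0-y-(1-a_0)P_k}{a_0(1-p_k)}, & \text{if } y\le a_0-2(1-a_0)P_k,\\[2pt] 1-\frac{(a_0-y)^2}{4P_k(1-p_k)a_0(1-a_0)}, & \text{otherwise}.\end{cases}$$
   Context: Let $0=p_0<p_1<\cdots<p_M<p_{M+1}=1$ with $M\ge1$, and let a labelled sample $\{(\bm x_j,y_j)\}_{j=1}^N$, $y_j\in\{0,1\}$, contain $N^+\ge1$ positive and $N^-\ge1$ negative samples; $a_0=N^+/N$. For $k=1,\dots,M$, $P_k=\sum_{i=1}^k\frac{(p_{i+1}-p_i)p_i}{1-p_i}$. A risk model is any function $c$ assigning to each sample a value $c(\bm x_j)\in[0,1]$. For $i=0,\dots,M$, $\mathrm{TP}_i=\#\{j:c(\bm x_j)\ge p_i,\ y_j=1\}$, $\mathrm{FP}_i=\#\{j:c(\bm x_j)\ge p_i,\ y_j=0\}$, and $\mathrm{TP}_{M+1}=\mathrm{FP}_{M+1}=0$. $\mathrm{AUROC}=\frac{1}{N^+N^-}\sum_{i=0}^M(\mathrm{FP}_i-\mathrm{FP}_{i+1})\mathrm{TP}_i$ and $\mathrm{AUNBC}=\frac1N\sum_{i=0}^M(p_{i+1}-p_i)\big(\mathrm{TP}_i-\mathrm{FP}_i\frac{p_i}{1-p_i}\big)$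 (one has $a_0p_1-(1-a_0)P_M\le\mathrm{AUNBC}\le a_0$). *)

theory Defs
  imports Complex_Main
begin

text \<open>Samples are indexed by j < N; sample j has features x j, label y j (0 or 1),
  and the risk model c gives it the score c (x j).\<close>

definition npos :: "nat \<Rightarrow> (nat \<Rightarrow> nat) \<Rightarrow> nat" where
  "npos N y = card {j. j < N \<and> y j = 1}"

definition nneg :: "nat \<Rightarrow> (nat \<Rightarrow> nat) \<Rightarrow> nat" where
  "nneg N y = card {j. j < N \<and> y j = 0}"

definition a0 :: "nat \<Rightarrow> (nat \<Rightarrow> nat) \<Rightarrow> real" where
  "a0 N y = real (npos N y) / real N"

definition TP :: "nat \<Rightarrow> (nat \<Rightarrow> real) \<Rightarrow> ('a \<Rightarrow> real) \<Rightarrow> (nat \<Rightarrow> 'a) \<Rightarrow> (nat \<Rightarrow> nat) \<Rightarrow> nat \<Rightarrow> nat \<Rightarrow> real" where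
  "TP M p c x y N i = (if i = M + 1 then 0
     else real (card {j. j < N \<and> c (x j) \<ge> p i \<and> y j = 1}))"

definition FP :: "nat \<Rightarrow> (nat \<Rightarrow> real) \<Rightarrow> ('a \<Rightarrow> real) \<Rightarrow> (nat \<Rightarrow> 'a) \<Rightarrow> (nat \<Rightarrow> nat) \<Rightarrow> nat \<Rightarrow> nat \<Rightarrow> real" where
  "FP M p c x y N i = (if i = M + 1 then 0
     else real (card {j. j < N \<and> c (x j) \<ge> p i \<and> y j = 0}))"

definition PP :: "(nat \<Rightarrow> real) \<Rightarrow> nat \<Rightarrow> real" where
  "PP p k = (\<Sum>i = 1..k. (p (i + 1) - p i) * p i / (1 - p i))"

definition AUROC :: "nat \<Rightarrow> (nat \<Rightarrow> real) \<Rightarrow> ('a \<Rightarrow> real) \<Rightarrow> (nat \<Rightarrow> 'a) \<Rightarrow> (nat \<Rightarrow> nat) \<Rightarrow> nat \<Rightarrow> real" where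
  "AUROC M p c x y N = 1 / (real (npos N y) * real (nneg N y)) *
     (\<Sum>i = 0..M. (FP M p c x y N i - FP M p c x y N (i + 1)) * TP M p c x y N i)"

definition AUNBC :: "nat \<Rightarrow> (nat \<Rightarrow> real) \<Rightarrow> ('a \<Rightarrow> real) \<Rightarrow> (nat \<Rightarrow> 'a) \<Rightarrow> (nat \<Rightarrow> nat) \<Rightarrow> nat \<Rightarrow> real" where
  "AUNBC M p c x y N = 1 / real N *
     (\<Sum>i = 0..M. (p (i + 1) - p i) *
        (TP M p c x y N i - FP M p c x y N i * p i / (1 - p i)))"

text \<open>B_k(y; a0); the paper only uses it on [a0 p_1 - (1 - a0) P_M, a0], where AUNBC lies.\<close>
definition Bk :: "(nat \<Rightarrow> real) \<Rightarrow> nat \<Rightarrow> real \<Rightarrow> real \<Rightarrow> real" where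
  "Bk p k v a = (if v \<le> a - 2 * (1 - a) * PP p k
     then 1 - (a - v - (1 - a) * PP p k) / (a * (1 - p k))
     else 1 - (a - v)^2 / (4 * PP p k * (1 - p k) * a * (1 - a)))"

end

theory Submission
  imports Defs
begin

lemma abel: fixes g v :: "nat \<Rightarrow> real"
  shows "(\<Sum>i=0..M. (g i - g (i+1)) * v i) = (\<Sum>k=1..M. g k * (v k - v (k-1))) + g 0 * v 0 - g (M+1) * v M"
  by (induction M) (auto simp: algebra_simps)

lemma key: fixes \<alpha> \<beta> U F A D :: real
  assumes "\<alpha> > 0" "\<beta> > 0" "U \<ge> 0" "F \<ge> 0" "F \<le> 1" "A \<le> U * F" "D \<ge> \<alpha> * U + \<beta> * F"
  shows "A \<le> (if D \<ge> 2*\<beta> then (D-\<beta>)/\<alpha> else D^2/(4*\<alpha>*\<beta>))"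
proof -
  have "\<alpha> * A \<le> \<alpha> * (U * F)" using assms by simp
  also have "\<dots> = F * (\<alpha> * U)" by simp
  also have "\<dots> \<le> F * (D - \<beta> * F)" using assms by (intro mult_left_mono) auto
  finally have h: "\<alpha> * A \<le> F * (D - \<beta> * F)" .
  show ?thesis
  proof (cases "D \<ge> 2*\<beta>")
    case True
    have "\<beta> * F \<le> \<beta>" using assms mult_left_mono[of F 1 \<beta>] by simp
    then have "0 \<le> D - \<beta> - \<beta> * F" using True by linarith
    then have "0 \<le> (1 - F) * (D - \<beta> - \<beta> * F)"
      using assms by (intro mult_nonneg_nonneg) auto
    moreover have "D - \<beta> - F * (D - \<beta> * F) = (1 - F) * (D - \<beta> - \<beta> * F)"
      by (simp add: algebra_simps)
    ultimately have "\<alpha> * A \<le> D - \<beta>" using h by linarith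
    then show ?thesis using True assms by (simp add: pos_le_divide_eq mult.commute)
  next
    case False
    have "0 \<le> (D - 2*\<beta>*F)^2" by simp
    then have "4*\<beta>*(F * (D - \<beta> * F)) \<le> D^2" by (simp add: power2_eq_square algebra_simps)
    then have "4*\<beta>*(\<alpha> * A) \<le> D^2" using h assms
      by (smt (verit) mult_left_mono)
    then show ?thesis using False assms by (simp add: pos_le_divide_eq mult_ac)
  qed
qed


theorem corollary1:
  fixes M N :: nat and p :: "nat \<Rightarrow> real" and x :: "nat \<Rightarrow> 'a"
    and y :: "nat \<Rightarrow> nat" and c :: "'a \<Rightarrow> real"
  assumes "M \<ge> 1"
    and "p 0 = 0" and "p (M + 1) = 1"
    and "\<And>i. i \<le> M \<Longrightarrow> p i < p (i + 1)"
    and "\<And>j. j < N \<Longrightarrow> y j \<in> {0, 1}"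
    and "npos N y \<ge> 1" and "nneg N y \<ge> 1"
    and "\<And>j. j < N \<Longrightarrow> c (x j) \<in> {0..1}"
  shows "1 \<ge> AUROC M p c x y N \<and>
         AUROC M p c x y N \<ge>
           max (Min ((\<lambda>k. Bk p k (AUNBC M p c x y N) (a0 N y)) ` {1..M})) 0"
proof -
  note M1 = assms(1) and p0 = assms(2) and pM = assms(3) and pstep = assms(4)
    and ylab = assms(5) and c01 = assms(8)
  define T where "T = TP M p c x y N"
  define F where "F = FP M p c x y N"
  define np where "np = real (npos N y)"
  define nn where "nn = real (nneg N y)"
  define a where "a = a0 N y"
  have np_pos: "np > 0" using assms(6) by (simp add: np_def)
  have nn_pos: "nn > 0" using assms(7) by (simp add: nn_def)
  have pmono: "p i \<le> p k" if "i \<le> k" "k \<le> M+1" for i k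
    using that
  proof (induction k)
    case 0 then show ?case by simp
  next
    case (Suc k)
    show ?case
    proof (cases "i = Suc k")
      case True then show ?thesis by simp
    next
      case False
      then have "i \<le> k" using Suc by simp
      then have "p i \<le> p k" using Suc by simp
      also have "p k < p (Suc k)" using pstep[of k] Suc by simp
      finally show ?thesis by simp
    qed
  qed
  have p_pos: "0 < p i" if "1 \<le> i" "i \<le> M+1" for i
  proof -
    have "p 0 < p 1" using pstep[of 0] by simp
    also have "p 1 \<le> p i" using pmono that by simp
    finally show ?thesis using p0 by simp
  qed
  have p_nonneg: "0 \<le> p i" if "i \<le> M+1" for i using pmono[of 0 i] that p0 by simp
  have p_lt1: "p i < 1" if "i \<le> M" for i
  proof -
    have "p i \<le> p M" using pmono that by simp
    also have "p M < p (M+1)" using pstep[of M] by simp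
    finally show ?thesis using pM by simp
  qed
  define TS where "TS i = {j. j < N \<and> c (x j) \<ge> p i \<and> y j = 1}" for i
  define FS where "FS i = {j. j < N \<and> c (x j) \<ge> p i \<and> y j = 0}" for i
  have finTS: "finite (TS i)" for i unfolding TS_def by auto
  have finFS: "finite (FS i)" for i unfolding FS_def by auto
  have Tdef: "T i = real (card (TS i))" if "i \<le> M" for i
    using that by (simp add: T_def TP_def TS_def)
  have Fdef: "F i = real (card (FS i))" if "i \<le> M" for i
    using that by (simp add: F_def FP_def FS_def)
  have FM1: "F (M+1) = 0" by (simp add: F_def FP_def)
  have F_nonneg: "F i \<ge> 0" for i by (simp add: F_def FP_def)
  have T_nonneg: "T i \<ge> 0" for i by (simp add: T_def TP_def)
  have Fmono: "F k \<le> F i" if "i \<le> k" "k \<le> M+1" for i k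
  proof (cases "k = M+1")
    case True then show ?thesis using FM1 F_nonneg by simp
  next
    case False
    then have "FS k \<subseteq> FS i" using pmono[of i k] that unfolding FS_def by auto
    then show ?thesis using False that Fdef finFS by (simp add: card_mono)
  qed
  have Tmono: "T k \<le> T i" if "i \<le> k" "k \<le> M+1" for i k
  proof (cases "k = M+1")
    case True then show ?thesis using T_nonneg by (simp add: T_def TP_def)
  next
    case False
    then have "TS k \<subseteq> TS i" using pmono[of i k] that unfolding TS_def by auto
    then show ?thesis using False that Tdef finTS by (simp add: card_mono)
  qed
  have F_le: "F i \<le> nn" for i
  proof (cases "i = M+1")
    case False
    have "FS i \<subseteq> {j. j < N \<and> y j = 0}" unfolding FS_def by auto
    then show ?thesis using False by (simp add: F_def FP_def FS_def[symmetric] nn_def nneg_def card_mono)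
  next
    case True then show ?thesis using nn_pos by (simp add: F_def FP_def)
  qed
  have T0: "T 0 = np"
  proof -
    have "TS 0 = {j. j < N \<and> y j = 1}" using c01 p0 unfolding TS_def by auto
    then show ?thesis using Tdef[of 0] by (simp add: np_def npos_def)
  qed
  have F0: "F 0 = nn"
  proof -
    have "FS 0 = {j. j < N \<and> y j = 0}" using c01 p0 unfolding FS_def by auto
    then show ?thesis using Fdef[of 0] by (simp add: nn_def nneg_def)
  qed
  have hN: "real N = np + nn"
  proof -
    have "{..<N} = {j. j < N \<and> y j = 1} \<union> {j. j < N \<and> y j = 0}" using ylab by (auto; force)
    moreover have "card ({j. j < N \<and> y j = 1} \<union> {j. j < N \<and> y j = 0})
        = card {j. j < N \<and> y j = 1} + card {j. j < N \<and> y j = 0}"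
      by (rule card_Un_disjoint) auto
    ultimately have "N = npos N y + nneg N y" unfolding npos_def nneg_def by (metis card_lessThan)
    then show ?thesis unfolding np_def nn_def by simp
  qed
  have a_eq: "a = np / real N" by (simp add: a_def a0_def np_def)
  have Npos: "real N > 0" using hN np_pos nn_pos by simp
  have a1_eq: "1 - a = nn / real N" using a_eq hN Npos by (simp add: field_simps)
  define v where "v i = np - T i" for i
  have v0: "v 0 = 0" using T0 by (simp add: v_def)
  have dv: "v (k-1) \<le> v k" if "1 \<le> k" "k \<le> M" for k
    using Tmono[of "k-1" k] that by (simp add: v_def)
  define Ls where "Ls = (\<Sum>k=1..M. F k * (v k - v (k-1)))"
  define S where "S = (\<Sum>k=1..M. (1 - p k) * (v k - v (k-1)))"
  define Q where "Q = (\<Sum>i=0..M. (p (i+1) - p i) * (F i * p i / (1 - p i)))"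
  have E1: "(\<Sum>i=0..M. (F i - F (i+1)) * v i) = Ls"
    using abel[of F v M] FM1 v0 by (simp add: Ls_def)
  have E2: "(\<Sum>i=0..M. (p (i+1) - p i) * v i) = S"
    using abel[of "\<lambda>i. 1 - p i" v M] pM v0 by (simp add: S_def)
  have tel: "(\<Sum>i=0..M. (F i - F (i+1))) = nn"
    using abel[of F "\<lambda>_. 1" M] FM1 F0 by simp
  have telp: "(\<Sum>i=0..M. (p (i+1) - p i)) = 1"
    using abel[of "\<lambda>i. 1 - p i" "\<lambda>_. 1" M] pM p0 by simp
  have telv: "(\<Sum>k=1..M. (v k - v (k-1))) = v M - v 0"
    using abel[of "\<lambda>_. 1" v M] by simp
  have AUROC_eq: "AUROC M p c x y N = 1 - Ls / (np * nn)"
  proof -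
    have "(\<Sum>i=0..M. (F i - F (i+1)) * T i) = (\<Sum>i=0..M. np * (F i - F (i+1)) - (F i - F (i+1)) * v i)"
      by (rule sum.cong) (auto simp: v_def algebra_simps)
    also have "\<dots> = np * nn - Ls"
      using tel E1 by (simp add: sum_subtractf sum_distrib_left[symmetric])
    finally have "(\<Sum>i=0..M. (F i - F (i+1)) * T i) = np * nn - Ls" .
    then show ?thesis using np_pos nn_pos
      by (simp add: AUROC_def T_def F_def np_def nn_def field_simps)
  qed
  have AUNBC_eq: "AUNBC M p c x y N = a - (S + Q) / real N"
  proof -
    have "(\<Sum>i=0..M. (p (i+1) - p i) * (T i - F i * p i / (1 - p i)))
        = (\<Sum>i=0..M. np * (p (i+1) - p i) - (p (i+1) - p i) * v i - (p (i+1) - p i) * (F i * p i / (1 - p i)))"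
      by (rule sum.cong) (auto simp: v_def algebra_simps)
    also have "\<dots> = np - S - Q"
      using telp E2 by (simp add: Q_def sum_subtractf sum_distrib_left[symmetric])
    finally have "(\<Sum>i=0..M. (p (i+1) - p i) * (T i - F i * p i / (1 - p i))) = np - S - Q" .
    then show ?thesis using Npos a_eq
      by (simp add: AUNBC_def T_def F_def field_simps)
  qed
  have Ls_nonneg: "Ls \<ge> 0" unfolding Ls_def
    using F_nonneg dv by (intro sum_nonneg mult_nonneg_nonneg) auto
  have Ls_le: "Ls \<le> np * nn"
  proof -
    have "Ls \<le> (\<Sum>k=1..M. nn * (v k - v (k-1)))" unfolding Ls_def
      using F_le dv by (intro sum_mono mult_right_mono) auto
    also have "\<dots> = nn * (v M - v 0)" using telv by (simp add: sum_distrib_left[symmetric])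
    also have "\<dots> \<le> nn * np" using v0 T_nonneg[of M] nn_pos by (simp add: v_def)
    finally show ?thesis by (simp add: mult.commute)
  qed
  have S_nonneg: "S \<ge> 0" unfolding S_def
    using dv p_lt1 by (intro sum_nonneg mult_nonneg_nonneg) (auto simp: less_imp_le)
  define r where "r = Max ((\<lambda>k. F k / (1 - p k)) ` {1..M})"
  have "r \<in> (\<lambda>k. F k / (1 - p k)) ` {1..M}" unfolding r_def using M1 by (intro Max_in) auto
  then obtain k where k: "k \<in> {1..M}" and rk: "r = F k / (1 - p k)" by auto
  have rge: "F i \<le> r * (1 - p i)" if "i \<in> {1..M}" for i
  proof -
    have "F i / (1 - p i) \<le> r" unfolding r_def using that by (intro Max_ge) auto
    then show ?thesis using p_lt1[of i] that by (simp add: divide_le_eq)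
  qed
  have LsS: "Ls \<le> r * S"
  proof -
    have "Ls \<le> (\<Sum>i=1..M. r * (1 - p i) * (v i - v (i-1)))" unfolding Ls_def
      using rge dv by (intro sum_mono mult_right_mono) auto
    also have "\<dots> = r * S" by (simp add: S_def sum_distrib_left mult.assoc)
    finally show ?thesis .
  qed
  have term_nonneg: "0 \<le> (p (i+1) - p i) * (F i * p i / (1 - p i))" if "i \<le> M" for i
    using pstep[of i] p_nonneg[of i] p_lt1[of i] F_nonneg[of i] that
    by (intro mult_nonneg_nonneg divide_nonneg_nonneg) auto
  have QP: "F k * PP p k \<le> Q"
  proof -
    have "F k * PP p k = (\<Sum>i=1..k. (p (i+1) - p i) * (F k * p i / (1 - p i)))"
      by (simp add: PP_def sum_distrib_left algebra_simps)
    also have "\<dots> \<le> (\<Sum>i=1..k. (p (i+1) - p i) * (F i * p i / (1 - p i)))"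
    proof (rule sum_mono)
      fix i assume i: "i \<in> {1..k}"
      have "F k * p i / (1 - p i) \<le> F i * p i / (1 - p i)"
        using Fmono[of i k] k i p_nonneg[of i] p_lt1[of i]
        by (intro divide_right_mono mult_right_mono) auto
      then show "(p (i+1) - p i) * (F k * p i / (1 - p i)) \<le> (p (i+1) - p i) * (F i * p i / (1 - p i))"
        using pstep[of i] i k by (intro mult_left_mono) auto
    qed
    also have "\<dots> \<le> Q" unfolding Q_def
      using k term_nonneg by (intro sum_mono2) auto
    finally show ?thesis .
  qed
  have PPpos: "PP p k > 0" unfolding PP_def
  proof (rule sum_pos)
    fix i assume i: "i \<in> {1..k}"
    show "0 < (p (i+1) - p i) * p i / (1 - p i)"
      using pstep[of i] p_pos[of i] p_lt1[of i] i k by (intro divide_pos_pos mult_pos_pos) auto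
  qed (use k in auto)
  define \<alpha> where "\<alpha> = a * (1 - p k)"
  define \<beta> where "\<beta> = (1 - a) * PP p k"
  define U where "U = S / (np * (1 - p k))"
  define Fn where "Fn = F k / nn"
  define A where "A = Ls / (np * nn)"
  define D where "D = (S + Q) / real N"
  have pk1: "1 - p k > 0" using p_lt1[of k] k by simp
  have apos: "a > 0" using a_eq np_pos Npos by simp
  have a1pos: "1 - a > 0" using a1_eq nn_pos Npos by simp
  have hA: "A \<le> U * Fn"
  proof -
    have "A \<le> r * S / (np * nn)" unfolding A_def using LsS np_pos nn_pos
      by (intro divide_right_mono) auto
    also have "\<dots> = U * Fn" unfolding rk U_def Fn_def using pk1 np_pos nn_pos by (simp add: field_simps)
    finally show ?thesis .
  qed
  have hD: "\<alpha> * U + \<beta> * Fn \<le> D"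
  proof -
    have e1: "\<alpha> * U = S / real N"
      unfolding \<alpha>_def a_eq U_def using pk1 np_pos Npos by (simp add: field_simps)
    have e2: "\<beta> * Fn = F k * PP p k / real N"
      unfolding \<beta>_def a1_eq Fn_def using nn_pos Npos by (simp add: field_simps)
    have "\<alpha> * U + \<beta> * Fn = (S + F k * PP p k) / real N"
      unfolding e1 e2 by (simp add: add_divide_distrib)
    also have "\<dots> \<le> D" unfolding D_def using QP Npos by (intro divide_right_mono) auto
    finally show ?thesis .
  qed
  have kk: "A \<le> (if D \<ge> 2*\<beta> then (D-\<beta>)/\<alpha> else D^2/(4*\<alpha>*\<beta>))"
  proof (rule key[of \<alpha> \<beta> U Fn A D])
    show "0 < \<alpha>" using apos pk1 by (simp add: \<alpha>_def)
    show "0 < \<beta>" using a1pos PPpos by (simp add: \<beta>_def)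
    show "0 \<le> U" using S_nonneg np_pos pk1 by (simp add: U_def)
    show "0 \<le> Fn" using F_nonneg[of k] nn_pos by (simp add: Fn_def)
    show "Fn \<le> 1" using F_le[of k] nn_pos by (simp add: Fn_def)
  qed (use hA hD in auto)
  have Bk_eq: "Bk p k (AUNBC M p c x y N) (a0 N y) = 1 - (if D \<ge> 2*\<beta> then (D-\<beta>)/\<alpha> else D^2/(4*\<alpha>*\<beta>))"
    unfolding Bk_def AUNBC_eq a_def[symmetric] D_def[symmetric] \<alpha>_def \<beta>_def
    by (auto simp: algebra_simps)
  have AU: "AUROC M p c x y N = 1 - A" using AUROC_eq by (simp add: A_def)
  have "Bk p k (AUNBC M p c x y N) (a0 N y) \<le> AUROC M p c x y N"
    using Bk_eq kk AU by simp
  moreover have "Min ((\<lambda>k. Bk p k (AUNBC M p c x y N) (a0 N y)) ` {1..M}) \<le> Bk p k (AUNBC M p c x y N) (a0 N y)"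
    using k by (intro Min_le) auto
  moreover have "0 \<le> AUROC M p c x y N" "AUROC M p c x y N \<le> 1"
    using AUROC_eq Ls_le Ls_nonneg np_pos nn_pos by (auto simp: divide_le_eq)
  ultimately show ?thesis by auto
qed

end
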